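(* Fix any $(2^{nR},2^{nR_f},n)$ code for the wiretap channel with causal state information and secure feedback described in the context, and let $M,X^n,Y^n,Z^n,S^n,K_f^n$ be the induced random variables. Then for each $j\in\{1,\dots,n\}$, \begin{multline*} H(K^{j}_{f}|Z^{j},S^{j})+I(M,X^{j};Y^{j}|K^{j}_{f},Z^{j},S^{j})+H(S^{j}|Z^{j})\\ \le H(K^{j-1}_{f}|Z^{j-1},S^{j-1})+I(M,X^{j-1};Y^{j-1}|K^{j-1}_{f},Z^{j-1},S^{j-1})+H(S^{j-1}|Z^{j-1})\\ +H(K_{j}^{f}|M,X^{j-1},K^{j-1}_{f},Z^{j-1},S^{j-1})+I(X_{j};Y_{j}|Z_{j},S_{j})+H(S_{j}|Z_{j}), \end{multline*} where quantities involving sequences of length $0$ are interpreted with empty sequences.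
   Context: Model: finite alphabets; state $S^n$ i.i.d. $\sim p(s)$; memoryless channel $p(y_i,z_i|x^i,y^{i-1},z^{i-1},s_i)=p(y_i,z_i|x_i,s_i)$, with $Y$ the legitimate output and $Z$ the eavesdropper output. The message $M$ is uniform on $\{1,\dots,2^{nR}\}$ and independent of $S^n$. Feedback symbols $K^f_i$, $i=1,\dots,n$, are generated according to $p(k^f_i|y^{i-1},k_f^{i-1})$, where $K^{i}_f=(K^f_1,\dots,K^f_i)$ denotes the feedback vector (and $K^f_i$ a single symbol); the encoder produces $X_i$ according to $p(x_i|m,x^{i-1},s^i,k_f^i)$. Notation $A^j=(A_1,\dots,A_j)$. *)

theory Defs
  imports "HOL-Probability.Probability"
begin

definition cond_entropy :: "'w pmf \<Rightarrow> ('w \<Rightarrow> 'a) \<Rightarrow> ('w \<Rightarrow> 'b) \<Rightarrow> real" where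
  "cond_entropy P X Y =
     - (\<Sum>ab\<in>set_pmf (map_pmf (\<lambda>w. (X w, Y w)) P).
          pmf (map_pmf (\<lambda>w. (X w, Y w)) P) ab *
          log 2 (pmf (map_pmf (\<lambda>w. (X w, Y w)) P) ab / pmf (map_pmf Y P) (snd ab)))"

definition cond_mutual_info ::
  "'w pmf \<Rightarrow> ('w \<Rightarrow> 'a) \<Rightarrow> ('w \<Rightarrow> 'b) \<Rightarrow> ('w \<Rightarrow> 'c) \<Rightarrow> real" where
  "cond_mutual_info P X Y Z = cond_entropy P X Z - cond_entropy P X (\<lambda>w. (Y w, Z w))"

text \<open>An outcome is the message together with the trace of per-time symbols
  (S_i, K^f_i, X_i, Y_i, Z_i), i = 1..length of the trace.
  Parameters:
   N   : number of messages (message uniform on {1..N}),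
   PS  : state distribution p(s),
   W   : channel p(y,z|x,s),
   F   : feedback generator p(k_i | y^{i-1}, k^{i-1}),
   Enc : encoder p(x_i | m, x^{i-1}, s^i, k^i).
  The time index i is implicit in the lengths of the argument lists,
  so time-varying feedback/encoding functions are covered.\<close>

type_synonym ('s,'k,'x,'y,'z) sym = "'s \<times> 'k \<times> 'x \<times> 'y \<times> 'z"

definition sS :: "('s,'k,'x,'y,'z) sym \<Rightarrow> 's" where "sS t = fst t"
definition sK :: "('s,'k,'x,'y,'z) sym \<Rightarrow> 'k" where "sK t = fst (snd t)"
definition sX :: "('s,'k,'x,'y,'z) sym \<Rightarrow> 'x" where "sX t = fst (snd (snd t))"
definition sY :: "('s,'k,'x,'y,'z) sym \<Rightarrow> 'y" where "sY t = fst (snd (snd (snd t)))"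
definition sZ :: "('s,'k,'x,'y,'z) sym \<Rightarrow> 'z" where "sZ t = snd (snd (snd (snd t)))"

primrec code_dist ::
  "nat \<Rightarrow> 's pmf \<Rightarrow> ('x \<Rightarrow> 's \<Rightarrow> ('y \<times> 'z) pmf) \<Rightarrow> ('y list \<Rightarrow> 'k list \<Rightarrow> 'k pmf)
   \<Rightarrow> (nat \<Rightarrow> 'x list \<Rightarrow> 's list \<Rightarrow> 'k list \<Rightarrow> 'x pmf) \<Rightarrow> nat
   \<Rightarrow> (nat \<times> ('s,'k,'x,'y,'z) sym list) pmf" where
  "code_dist N PS W F Enc 0 = map_pmf (\<lambda>m. (m, [])) (pmf_of_set {1..N})"
| "code_dist N PS W F Enc (Suc i) =
     bind_pmf (code_dist N PS W F Enc i) (\<lambda>(m, tr).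
     bind_pmf PS (\<lambda>s.
     bind_pmf (F (map sY tr) (map sK tr)) (\<lambda>k.
     bind_pmf (Enc m (map sX tr) (map sS tr @ [s]) (map sK tr @ [k])) (\<lambda>x.
     bind_pmf (W x s) (\<lambda>(y, z).
     return_pmf (m, tr @ [(s, k, x, y, z)]))))))"

text \<open>Random variables on the outcome space: prefixes A^j (length j, empty for j = 0)
  and single symbols A_j (1-based).\<close>
definition Mv :: "nat \<times> ('s,'k,'x,'y,'z) sym list \<Rightarrow> nat" where "Mv w = fst w"
definition Sseq :: "nat \<Rightarrow> nat \<times> ('s,'k,'x,'y,'z) sym list \<Rightarrow> 's list" where "Sseq j w = map sS (take j (snd w))"
definition Kseq :: "nat \<Rightarrow> nat \<times> ('s,'k,'x,'y,'z) sym list \<Rightarrow> 'k list" where "Kseq j w = map sK (take j (snd w))"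
definition Xseq :: "nat \<Rightarrow> nat \<times> ('s,'k,'x,'y,'z) sym list \<Rightarrow> 'x list" where "Xseq j w = map sX (take j (snd w))"
definition Yseq :: "nat \<Rightarrow> nat \<times> ('s,'k,'x,'y,'z) sym list \<Rightarrow> 'y list" where "Yseq j w = map sY (take j (snd w))"
definition Zseq :: "nat \<Rightarrow> nat \<times> ('s,'k,'x,'y,'z) sym list \<Rightarrow> 'z list" where "Zseq j w = map sZ (take j (snd w))"
definition Ssym :: "nat \<Rightarrow> nat \<times> ('s,'k,'x,'y,'z) sym list \<Rightarrow> 's" where "Ssym j w = sS (snd w ! (j - 1))"
definition Ksym :: "nat \<Rightarrow> nat \<times> ('s,'k,'x,'y,'z) sym list \<Rightarrow> 'k" where "Ksym j w = sK (snd w ! (j - 1))"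
definition Xsym :: "nat \<Rightarrow> nat \<times> ('s,'k,'x,'y,'z) sym list \<Rightarrow> 'x" where "Xsym j w = sX (snd w ! (j - 1))"
definition Ysym :: "nat \<Rightarrow> nat \<times> ('s,'k,'x,'y,'z) sym list \<Rightarrow> 'y" where "Ysym j w = sY (snd w ! (j - 1))"
definition Zsym :: "nat \<Rightarrow> nat \<times> ('s,'k,'x,'y,'z) sym list \<Rightarrow> 'z" where "Zsym j w = sZ (snd w ! (j - 1))"

end

theory Submission
  imports Defs
begin


definition ent :: "'w pmf \<Rightarrow> ('w \<Rightarrow> 'a) \<Rightarrow> real" where
  "ent P V = - (\<Sum>w\<in>set_pmf P. pmf P w * log 2 (pmf (map_pmf V P) (V w)))"

lemma pr_pos: "w \<in> set_pmf P \<Longrightarrow> 0 < pmf (map_pmf V P) (V w)"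
  by (simp add: pmf_positive)

lemma pr_sum: "finite (set_pmf P) \<Longrightarrow> pmf (map_pmf V P) v = sum (pmf P) {w\<in>set_pmf P. V w = v}"
proof -
  assume f: "finite (set_pmf P)"
  have "pmf (map_pmf V P) v = measure P (V -` {v} \<inter> set_pmf P)"
    by (simp add: pmf_map measure_Int_set_pmf)
  also have "\<dots> = sum (pmf P) (V -` {v} \<inter> set_pmf P)"
    using f by (simp add: measure_measure_pmf_finite)
  also have "V -` {v} \<inter> set_pmf P = {w\<in>set_pmf P. V w = v}" by auto
  finally show ?thesis .
qed

lemma sum_map:
  assumes f: "finite (set_pmf P)"
  shows "(\<Sum>t\<in>set_pmf (map_pmf V P). pmf (map_pmf V P) t * h t) = (\<Sum>w\<in>set_pmf P. pmf P w * h (V w))"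
proof -
  have "(\<Sum>t\<in>set_pmf (map_pmf V P). pmf (map_pmf V P) t * h t)
      = (\<Sum>t\<in>set_pmf (map_pmf V P). \<Sum>w\<in>{w\<in>set_pmf P. V w = t}. pmf P w * h (V w))"
    by (intro sum.cong refl) (simp add: pr_sum[OF f] sum_distrib_right)
  also have "\<dots> = (\<Sum>w\<in>set_pmf P. pmf P w * h (V w))"
    using f by (intro sum.group) auto
  finally show ?thesis .
qed

lemma ce_ent:
  assumes f: "finite (set_pmf P)"
  shows "cond_entropy P X Y = ent P (\<lambda>w. (X w, Y w)) - ent P Y"
proof -
  have "cond_entropy P X Y = - (\<Sum>w\<in>set_pmf P. pmf P w *
      log 2 (pmf (map_pmf (\<lambda>w. (X w, Y w)) P) (X w, Y w) / pmf (map_pmf Y P) (Y w)))"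
    unfolding cond_entropy_def
    by (subst sum_map[OF f]) simp
  also have "\<dots> = - (\<Sum>w\<in>set_pmf P. pmf P w * log 2 (pmf (map_pmf (\<lambda>w. (X w, Y w)) P) (X w, Y w)))
       + (\<Sum>w\<in>set_pmf P. pmf P w * log 2 (pmf (map_pmf Y P) (Y w)))"
  proof -
    have "(\<Sum>w\<in>set_pmf P. pmf P w *
      log 2 (pmf (map_pmf (\<lambda>w. (X w, Y w)) P) (X w, Y w) / pmf (map_pmf Y P) (Y w)))
      = (\<Sum>w\<in>set_pmf P. pmf P w * log 2 (pmf (map_pmf (\<lambda>w. (X w, Y w)) P) (X w, Y w))
          - pmf P w * log 2 (pmf (map_pmf Y P) (Y w)))"
    proof (intro sum.cong refl)
      fix w assume w: "w \<in> set_pmf P"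
      have a: "0 < pmf (map_pmf (\<lambda>w. (X w, Y w)) P) (X w, Y w)"
        using pr_pos[OF w, of "\<lambda>w. (X w, Y w)"] by simp
      have b: "0 < pmf (map_pmf Y P) (Y w)" using pr_pos[OF w] .
      show "pmf P w * log 2 (pmf (map_pmf (\<lambda>w. (X w, Y w)) P) (X w, Y w) / pmf (map_pmf Y P) (Y w))
          = pmf P w * log 2 (pmf (map_pmf (\<lambda>w. (X w, Y w)) P) (X w, Y w))
          - pmf P w * log 2 (pmf (map_pmf Y P) (Y w))"
        using a b by (simp add: log_divide right_diff_distrib)
    qed
    then show ?thesis by (simp add: sum_subtractf)
  qed
  finally show ?thesis unfolding ent_def by simp
qed

lemma ent_cong:
  assumes "\<And>w w'. w \<in> set_pmf P \<Longrightarrow> w' \<in> set_pmf P \<Longrightarrow> (A w = A w') = (B w = B w')"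
    and f: "finite (set_pmf P)"
  shows "ent P A = ent P B"
  unfolding ent_def
proof (intro arg_cong[where f=uminus] sum.cong refl)
  fix w assume w: "w \<in> set_pmf P"
  have "{w'\<in>set_pmf P. A w' = A w} = {w'\<in>set_pmf P. B w' = B w}"
  proof (rule Collect_cong)
    fix x show "(x \<in> set_pmf P \<and> A x = A w) = (x \<in> set_pmf P \<and> B x = B w)"
      using assms(1)[OF w, of x] by metis
  qed
  then show "pmf P w * log 2 (pmf (map_pmf A P) (A w)) = pmf P w * log 2 (pmf (map_pmf B P) (B w))"
    by (simp add: pr_sum[OF f])
qed

lemma ent_fact:
  assumes f: "finite (set_pmf P)"
    and h: "\<And>w. w \<in> set_pmf P \<Longrightarrow> pmf (map_pmf A P) (A w) * pmf (map_pmf B P) (B w)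
             = pmf (map_pmf C P) (C w) * pmf (map_pmf D P) (D w)"
  shows "ent P A + ent P B = ent P C + ent P D"
proof -
  have "\<And>w. w \<in> set_pmf P \<Longrightarrow>
     pmf P w * log 2 (pmf (map_pmf A P) (A w)) + pmf P w * log 2 (pmf (map_pmf B P) (B w))
   = pmf P w * log 2 (pmf (map_pmf C P) (C w)) + pmf P w * log 2 (pmf (map_pmf D P) (D w))"
  proof -
    fix w assume w: "w \<in> set_pmf P"
    have "log 2 (pmf (map_pmf A P) (A w)) + log 2 (pmf (map_pmf B P) (B w))
        = log 2 (pmf (map_pmf A P) (A w) * pmf (map_pmf B P) (B w))"
      using pr_pos[OF w, of A] pr_pos[OF w, of B] by (simp add: log_mult)
    also have "\<dots> = log 2 (pmf (map_pmf C P) (C w) * pmf (map_pmf D P) (D w))" using h[OF w] by simp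
    also have "\<dots> = log 2 (pmf (map_pmf C P) (C w)) + log 2 (pmf (map_pmf D P) (D w))"
      using pr_pos[OF w, of C] pr_pos[OF w, of D] by (simp add: log_mult)
    finally show "?thesis w" by (simp add: distrib_left[symmetric])
  qed
  then have "(\<Sum>w\<in>set_pmf P. pmf P w * log 2 (pmf (map_pmf A P) (A w)) + pmf P w * log 2 (pmf (map_pmf B P) (B w)))
    = (\<Sum>w\<in>set_pmf P. pmf P w * log 2 (pmf (map_pmf C P) (C w)) + pmf P w * log 2 (pmf (map_pmf D P) (D w)))"
    by (rule sum.cong[OF refl])
  then show ?thesis unfolding ent_def by (simp add: sum.distrib)
qed


lemma marg_sum:
  assumes f: "finite (set_pmf P)"
  shows "(\<Sum>x\<in>set_pmf (map_pmf X P). pmf (map_pmf (\<lambda>w. (X w, Y w)) P) (x, y)) = pmf (map_pmf Y P) y"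
proof -
  have "(\<Sum>x\<in>set_pmf (map_pmf X P). pmf (map_pmf (\<lambda>w. (X w, Y w)) P) (x, y))
     = (\<Sum>x\<in>set_pmf (map_pmf X P). sum (pmf P) {w\<in>{w\<in>set_pmf P. Y w = y}. X w = x})"
    by (intro sum.cong refl) (simp add: pr_sum[OF f] conj_commute conj_left_commute)
  also have "\<dots> = sum (pmf P) {w\<in>set_pmf P. Y w = y}"
    using f by (intro sum.group) auto
  finally show ?thesis by (simp add: pr_sum[OF f])
qed

lemma ent_submod:
  assumes f: "finite (set_pmf P)"
  shows "ent P (\<lambda>w. (X w, Y w, Z w)) + ent P Y \<le> ent P (\<lambda>w. (X w, Y w)) + ent P (\<lambda>w. (Y w, Z w))"
proof -
  define T where "T = (\<lambda>w. (X w, Y w, Z w))"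
  define pT where "pT = pmf (map_pmf T P)"
  define pXY where "pXY = pmf (map_pmf (\<lambda>w. (X w, Y w)) P)"
  define pYZ where "pYZ = pmf (map_pmf (\<lambda>w. (Y w, Z w)) P)"
  define pY where "pY = pmf (map_pmf Y P)"
  define g where "g t = pXY (fst t, fst (snd t)) * pYZ (snd t) / pY (fst (snd t))" for t
  define r where "r w = g (T w) / pT (T w)" for w
  have pos: "0 < pT (T w)" "0 < pXY (X w, Y w)" "0 < pYZ (Y w, Z w)" "0 < pY (Y w)"
    if "w \<in> set_pmf P" for w
    using pr_pos[OF that, of T] pr_pos[OF that, of "\<lambda>w. (X w, Y w)"]
      pr_pos[OF that, of "\<lambda>w. (Y w, Z w)"] pr_pos[OF that, of Y]
    by (auto simp: pT_def pXY_def pYZ_def pY_def)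
  have rpos: "0 < r w" if "w \<in> set_pmf P" for w
    using pos[OF that] by (simp add: r_def g_def T_def)
  have eq: "ent P (\<lambda>w. (X w, Y w, Z w)) + ent P Y - ent P (\<lambda>w. (X w, Y w)) - ent P (\<lambda>w. (Y w, Z w))
      = (\<Sum>w\<in>set_pmf P. pmf P w * log 2 (r w))"
  proof -
    have lr: "\<And>w. w \<in> set_pmf P \<Longrightarrow> log 2 (r w) = log 2 (pXY (X w, Y w)) + log 2 (pYZ (Y w, Z w))
         - log 2 (pT (T w)) - log 2 (pY (Y w))"
    proof -
      fix w assume w: "w \<in> set_pmf P"
      note p = pos[OF w]
      show "?thesis w" using p by (simp add: r_def g_def T_def log_mult log_divide)
    qed
    have "(\<Sum>w\<in>set_pmf P. pmf P w * log 2 (r w)) = (\<Sum>w\<in>set_pmf P.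
        pmf P w * log 2 (pXY (X w, Y w)) + pmf P w * log 2 (pYZ (Y w, Z w))
         - pmf P w * log 2 (pT (T w)) - pmf P w * log 2 (pY (Y w)))"
    proof (intro sum.cong refl)
      fix w assume w: "w \<in> set_pmf P"
      show "pmf P w * log 2 (r w) = pmf P w * log 2 (pXY (X w, Y w)) + pmf P w * log 2 (pYZ (Y w, Z w))
         - pmf P w * log 2 (pT (T w)) - pmf P w * log 2 (pY (Y w))"
        by (simp add: lr[OF w] algebra_simps)
    qed
    then show ?thesis
      unfolding ent_def by (simp add: sum.distrib sum_subtractf pT_def pXY_def pYZ_def pY_def T_def)
  qed
  have le1: "(\<Sum>w\<in>set_pmf P. pmf P w * log 2 (r w)) \<le> (\<Sum>w\<in>set_pmf P. pmf P w * ((r w - 1) / ln 2))"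
  proof (intro sum_mono mult_left_mono)
    fix w assume w: "w \<in> set_pmf P"
    show "log 2 (r w) \<le> (r w - 1) / ln 2"
      using ln_le_minus_one[OF rpos[OF w]] by (simp add: log_def divide_right_mono)
  qed simp
  have sr: "(\<Sum>w\<in>set_pmf P. pmf P w * r w) \<le> 1"
  proof -
    have "(\<Sum>w\<in>set_pmf P. pmf P w * r w) = (\<Sum>t\<in>set_pmf (map_pmf T P). pT t * (g t / pT t))"
      unfolding pT_def by (subst sum_map[OF f]) (simp add: r_def pT_def)
    also have "\<dots> = (\<Sum>t\<in>set_pmf (map_pmf T P). g t)"
      by (intro sum.cong refl) (simp add: pT_def pmf_positive[THEN less_imp_neq, symmetric])
    also have "\<dots> \<le> (\<Sum>t\<in>set_pmf (map_pmf X P) \<times> set_pmf (map_pmf (\<lambda>w. (Y w, Z w)) P). g t)"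
      using f by (intro sum_mono2) (auto simp: T_def g_def pXY_def pYZ_def pY_def)
    also have "\<dots> = (\<Sum>x\<in>set_pmf (map_pmf X P). \<Sum>yz\<in>set_pmf (map_pmf (\<lambda>w. (Y w, Z w)) P). g (x, yz))"
      by (simp add: sum.cartesian_product)
    also have "\<dots> = (\<Sum>yz\<in>set_pmf (map_pmf (\<lambda>w. (Y w, Z w)) P). \<Sum>x\<in>set_pmf (map_pmf X P). g (x, yz))"
      by (rule sum.swap)
    also have "\<dots> = (\<Sum>yz\<in>set_pmf (map_pmf (\<lambda>w. (Y w, Z w)) P). pmf (map_pmf (\<lambda>w. (Y w, Z w)) P) yz)"
    proof (intro sum.cong refl)
      fix yz assume yz: "yz \<in> set_pmf (map_pmf (\<lambda>w. (Y w, Z w)) P)"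
      then obtain w where w: "w \<in> set_pmf P" "yz = (Y w, Z w)" by auto
      have "(\<Sum>x\<in>set_pmf (map_pmf X P). g (x, yz)) = (\<Sum>x\<in>set_pmf (map_pmf X P). pXY (x, fst yz)) * pYZ yz / pY (fst yz)"
        by (simp add: g_def sum_distrib_right sum_divide_distrib)
      also have "\<dots> = pY (fst yz) * pYZ yz / pY (fst yz)"
        unfolding pXY_def pY_def marg_sum[OF f] ..
      also have "\<dots> = pYZ yz" using pos(4)[OF w(1)] w(2) by simp
      finally show "(\<Sum>x\<in>set_pmf (map_pmf X P). g (x, yz)) = pmf (map_pmf (\<lambda>w. (Y w, Z w)) P) yz"
        by (simp add: pYZ_def)
    qed
    also have "\<dots> = 1" using f by (intro sum_pmf_eq_1) auto
    finally show ?thesis .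
  qed
  have "(\<Sum>w\<in>set_pmf P. pmf P w * ((r w - 1) / ln 2)) = ((\<Sum>w\<in>set_pmf P. pmf P w * r w) - (\<Sum>w\<in>set_pmf P. pmf P w)) / ln 2"
    by (simp add: sum_divide_distrib[symmetric] right_diff_distrib sum_subtractf)
  also have "(\<Sum>w\<in>set_pmf P. pmf P w) = 1" using f by (intro sum_pmf_eq_1) auto
  finally have "(\<Sum>w\<in>set_pmf P. pmf P w * ((r w - 1) / ln 2)) \<le> 0"
    using sr by (simp add: divide_nonpos_pos)
  with eq le1 show ?thesis by linarith
qed


lemma kern_pmf:
  fixes D :: "'a pmf" and K :: "'a \<Rightarrow> 'b pmf" and N :: "'a \<Rightarrow> 'b \<Rightarrow> 't pmf"
  assumes KL: "\<And>a. a \<in> set_pmf D \<Longrightarrow> K a = L (\<alpha> a)"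
    and sup: "\<And>a b t. a \<in> set_pmf D \<Longrightarrow> b \<in> set_pmf (K a) \<Longrightarrow> t \<in> set_pmf (N a b) \<Longrightarrow>
       \<Phi> t = \<phi> b \<and> A t = \<alpha> a \<and> \<Psi> t = \<psi> a"
  shows "pmf (map_pmf (\<lambda>t. (\<Phi> t, A t, \<Psi> t)) (bind_pmf D (\<lambda>a. bind_pmf (K a) (N a)))) (v, c, d)
     = pmf (map_pmf \<phi> (L c)) v * pmf (map_pmf (\<lambda>a. (\<alpha> a, \<psi> a)) D) (c, d)"
proof -
  have "map_pmf (\<lambda>t. (\<Phi> t, A t, \<Psi> t)) (bind_pmf D (\<lambda>a. bind_pmf (K a) (N a)))
      = bind_pmf D (\<lambda>a. bind_pmf (K a) (\<lambda>b. map_pmf (\<lambda>t. (\<Phi> t, A t, \<Psi> t)) (N a b)))"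
    by (simp add: map_bind_pmf)
  also have "\<dots> = bind_pmf D (\<lambda>a. map_pmf (\<lambda>b. (\<phi> b, \<alpha> a, \<psi> a)) (L (\<alpha> a)))"
  proof (intro bind_pmf_cong refl)
    fix a assume a: "a \<in> set_pmf D"
    have "bind_pmf (K a) (\<lambda>b. map_pmf (\<lambda>t. (\<Phi> t, A t, \<Psi> t)) (N a b))
        = bind_pmf (K a) (\<lambda>b. return_pmf (\<phi> b, \<alpha> a, \<psi> a))"
    proof (intro bind_pmf_cong refl)
      fix b assume b: "b \<in> set_pmf (K a)"
      have "map_pmf (\<lambda>t. (\<Phi> t, A t, \<Psi> t)) (N a b) = map_pmf (\<lambda>_. (\<phi> b, \<alpha> a, \<psi> a)) (N a b)"
        using sup[OF a b] by (intro map_pmf_cong refl) auto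
      then show "map_pmf (\<lambda>t. (\<Phi> t, A t, \<Psi> t)) (N a b) = return_pmf (\<phi> b, \<alpha> a, \<psi> a)" by simp
    qed
    also have "\<dots> = map_pmf (\<lambda>b. (\<phi> b, \<alpha> a, \<psi> a)) (L (\<alpha> a))"
      by (simp add: map_pmf_def KL[OF a])
    finally show "bind_pmf (K a) (\<lambda>b. map_pmf (\<lambda>t. (\<Phi> t, A t, \<Psi> t)) (N a b))
        = map_pmf (\<lambda>b. (\<phi> b, \<alpha> a, \<psi> a)) (L (\<alpha> a))" .
  qed
  finally have e: "map_pmf (\<lambda>t. (\<Phi> t, A t, \<Psi> t)) (bind_pmf D (\<lambda>a. bind_pmf (K a) (N a)))
      = bind_pmf D (\<lambda>a. map_pmf (\<lambda>b. (\<phi> b, \<alpha> a, \<psi> a)) (L (\<alpha> a)))" .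
  have pt: "pmf (map_pmf (\<lambda>b. (\<phi> b, \<alpha> a, \<psi> a)) (L (\<alpha> a))) (v, c, d)
      = pmf (map_pmf \<phi> (L c)) v * indicator {a. (\<alpha> a, \<psi> a) = (c, d)} a" for a
  proof (cases "\<alpha> a = c \<and> \<psi> a = d")
    case True
    then have "(\<lambda>b. (\<phi> b, \<alpha> a, \<psi> a)) -` {(v, c, d)} = \<phi> -` {v}" by auto
    then show ?thesis using True by (simp add: pmf_map)
  next
    case False
    then have "(\<lambda>b. (\<phi> b, \<alpha> a, \<psi> a)) -` {(v, c, d)} = {}" by auto
    then show ?thesis using False by (simp add: pmf_map)
  qed
  show ?thesis
    unfolding e pmf_bind pt
    by (simp add: pmf_map vimage_def)
qed


lemma kern_ent:
  fixes D :: "'a pmf" and K :: "'a \<Rightarrow> 'b pmf" and N :: "'a \<Rightarrow> 'b \<Rightarrow> 't pmf"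
  assumes f: "finite (set_pmf R)"
    and R: "R = bind_pmf D (\<lambda>a. bind_pmf (K a) (N a))"
    and KL: "\<And>a. a \<in> set_pmf D \<Longrightarrow> K a = L (\<alpha> a)"
    and sup: "\<And>a b t. a \<in> set_pmf D \<Longrightarrow> b \<in> set_pmf (K a) \<Longrightarrow> t \<in> set_pmf (N a b) \<Longrightarrow>
       \<Phi> t = \<phi> b \<and> A t = \<alpha> a \<and> \<Psi> t = \<psi> a"
    and e1: "\<And>t t'. t \<in> set_pmf R \<Longrightarrow> t' \<in> set_pmf R \<Longrightarrow> (E1 t = E1 t') = (\<Phi> t = \<Phi> t' \<and> A t = A t' \<and> \<Psi> t = \<Psi> t')"
    and e2: "\<And>t t'. t \<in> set_pmf R \<Longrightarrow> t' \<in> set_pmf R \<Longrightarrow> (E2 t = E2 t') = (A t = A t')"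
    and e3: "\<And>t t'. t \<in> set_pmf R \<Longrightarrow> t' \<in> set_pmf R \<Longrightarrow> (E3 t = E3 t') = (\<Phi> t = \<Phi> t' \<and> A t = A t')"
    and e4: "\<And>t t'. t \<in> set_pmf R \<Longrightarrow> t' \<in> set_pmf R \<Longrightarrow> (E4 t = E4 t') = (A t = A t' \<and> \<Psi> t = \<Psi> t')"
  shows "ent R E1 + ent R E2 = ent R E3 + ent R E4"
proof -
  have c1: "ent R E1 = ent R (\<lambda>t. (\<Phi> t, A t, \<Psi> t))" by (rule ent_cong[OF _ f]) (simp add: e1)
  have c2: "ent R E2 = ent R (\<lambda>t. ((), A t, ()))" by (rule ent_cong[OF _ f]) (simp add: e2)
  have c3: "ent R E3 = ent R (\<lambda>t. (\<Phi> t, A t, ()))" by (rule ent_cong[OF _ f]) (simp add: e3)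
  have c4: "ent R E4 = ent R (\<lambda>t. ((), A t, \<Psi> t))" by (rule ent_cong[OF _ f]) (simp add: e4)
  have k1: "pmf (map_pmf (\<lambda>t. (\<Phi> t, A t, \<Psi> t)) R) (v, c, d)
     = pmf (map_pmf \<phi> (L c)) v * pmf (map_pmf (\<lambda>a. (\<alpha> a, \<psi> a)) D) (c, d)" for v c d
    unfolding R apply (rule kern_pmf[where L=L and \<alpha>=\<alpha> and \<phi>=\<phi> and \<psi>=\<psi>]) apply (erule KL) using sup by auto
  have k2: "pmf (map_pmf (\<lambda>t. ((), A t, ())) R) ((), c, ())
     = pmf (map_pmf (\<lambda>_. ()) (L c)) () * pmf (map_pmf (\<lambda>a. (\<alpha> a, ())) D) (c, ())" for c
    unfolding R apply (rule kern_pmf[where L=L and \<alpha>=\<alpha> and \<phi>="\<lambda>_. ()" and \<psi>="\<lambda>_. ()"]) apply (erule KL) using sup by auto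
  have k3: "pmf (map_pmf (\<lambda>t. (\<Phi> t, A t, ())) R) (v, c, ())
     = pmf (map_pmf \<phi> (L c)) v * pmf (map_pmf (\<lambda>a. (\<alpha> a, ())) D) (c, ())" for v c
    unfolding R apply (rule kern_pmf[where L=L and \<alpha>=\<alpha> and \<phi>=\<phi> and \<psi>="\<lambda>_. ()"]) apply (erule KL) using sup by auto
  have k4: "pmf (map_pmf (\<lambda>t. ((), A t, \<Psi> t)) R) ((), c, d)
     = pmf (map_pmf (\<lambda>_. ()) (L c)) () * pmf (map_pmf (\<lambda>a. (\<alpha> a, \<psi> a)) D) (c, d)" for c d
    unfolding R apply (rule kern_pmf[where L=L and \<alpha>=\<alpha> and \<phi>="\<lambda>_. ()" and \<psi>=\<psi>]) apply (erule KL) using sup by auto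
  have "ent R (\<lambda>t. (\<Phi> t, A t, \<Psi> t)) + ent R (\<lambda>t. ((), A t, ()))
      = ent R (\<lambda>t. (\<Phi> t, A t, ())) + ent R (\<lambda>t. ((), A t, \<Psi> t))"
    by (rule ent_fact[OF f]) (simp only: k1 k2 k3 k4, simp)
  then show ?thesis using c1 c2 c3 c4 by simp
qed


lemma submod_gen:
  assumes f: "finite (set_pmf R)"
    and e1: "\<And>t t'. t \<in> set_pmf R \<Longrightarrow> t' \<in> set_pmf R \<Longrightarrow> (E1 t = E1 t') = (X t = X t' \<and> Y t = Y t' \<and> Z t = Z t')"
    and e2: "\<And>t t'. t \<in> set_pmf R \<Longrightarrow> t' \<in> set_pmf R \<Longrightarrow> (E2 t = E2 t') = (Y t = Y t')"
    and e3: "\<And>t t'. t \<in> set_pmf R \<Longrightarrow> t' \<in> set_pmf R \<Longrightarrow> (E3 t = E3 t') = (X t = X t' \<and> Y t = Y t')"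
    and e4: "\<And>t t'. t \<in> set_pmf R \<Longrightarrow> t' \<in> set_pmf R \<Longrightarrow> (E4 t = E4 t') = (Y t = Y t' \<and> Z t = Z t')"
  shows "ent R E1 + ent R E2 \<le> ent R E3 + ent R E4"
proof -
  have c1: "ent R E1 = ent R (\<lambda>t. (X t, Y t, Z t))" by (rule ent_cong[OF _ f]) (simp add: e1)
  have c2: "ent R E2 = ent R Y" by (rule ent_cong[OF _ f]) (simp add: e2)
  have c3: "ent R E3 = ent R (\<lambda>t. (X t, Y t))" by (rule ent_cong[OF _ f]) (simp add: e3)
  have c4: "ent R E4 = ent R (\<lambda>t. (Y t, Z t))" by (rule ent_cong[OF _ f]) (simp add: e4)
  show ?thesis using ent_submod[OF f, of X Y Z] c1 c2 c3 c4 by simp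
qed

lemma ce_map: "cond_entropy (map_pmf f P) X Y = cond_entropy P (\<lambda>w. X (f w)) (\<lambda>w. Y (f w))"
  unfolding cond_entropy_def by (simp add: map_pmf_comp)



definition trunc :: "nat \<Rightarrow> 'm \<times> 'e list \<Rightarrow> 'm \<times> 'e list" where
  "trunc j w = (fst w, take j (snd w))"

definition GG :: "(nat \<times> ('s,'k,'x,'y,'z) sym list) \<times> 'k \<times> 's \<times> 'x \<times> 'y \<times> 'z \<Rightarrow> nat \<times> ('s,'k,'x,'y,'z) sym list" where
  "GG t = (fst (fst t), snd (fst t) @ [(fst (snd (snd t)), fst (snd t), fst (snd (snd (snd t))),
            fst (snd (snd (snd (snd t)))), snd (snd (snd (snd (snd t)))))])"

definition RR :: "nat \<Rightarrow> 's pmf \<Rightarrow> ('x \<Rightarrow> 's \<Rightarrow> ('y \<times> 'z) pmf) \<Rightarrow> ('y list \<Rightarrow> 'k list \<Rightarrow> 'k pmf)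
   \<Rightarrow> (nat \<Rightarrow> 'x list \<Rightarrow> 's list \<Rightarrow> 'k list \<Rightarrow> 'x pmf) \<Rightarrow> nat
   \<Rightarrow> ((nat \<times> ('s,'k,'x,'y,'z) sym list) \<times> 'k \<times> 's \<times> 'x \<times> 'y \<times> 'z) pmf" where
  "RR N PS W F Enc i = bind_pmf (code_dist N PS W F Enc i) (\<lambda>u.
     bind_pmf (F (map sY (snd u)) (map sK (snd u))) (\<lambda>k.
     bind_pmf PS (\<lambda>s.
     bind_pmf (Enc (fst u) (map sX (snd u)) (map sS (snd u) @ [s]) (map sK (snd u) @ [k])) (\<lambda>x.
     bind_pmf (W x s) (\<lambda>yz. return_pmf (u, k, s, x, fst yz, snd yz))))))"

lemma code_Suc: "code_dist N PS W F Enc (Suc i) = map_pmf GG (RR N PS W F Enc i)"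
  unfolding RR_def code_dist.simps map_bind_pmf
  apply (rule bind_pmf_cong[OF refl])
  apply (clarsimp simp: map_bind_pmf GG_def split_beta case_prod_unfold)
  apply (rule bind_commute_pmf)
  done


lemma RR_supp: "t \<in> set_pmf (RR N PS W F Enc i) \<Longrightarrow> fst t \<in> set_pmf (code_dist N PS W F Enc i)"
  unfolding RR_def by auto

lemma code_len: "w \<in> set_pmf (code_dist N PS W F Enc i) \<Longrightarrow> length (snd w) = i"
proof (induction i arbitrary: w)
  case 0
  then show ?case by auto
next
  case (Suc i)
  then obtain t where t: "t \<in> set_pmf (RR N PS W F Enc i)" "w = GG t"
    unfolding code_Suc by auto
  show ?case using Suc.IH[OF RR_supp[OF t(1)]] t(2) by (simp add: GG_def)
qed

lemma RR_finite:
  fixes PS :: "'s::finite pmf" and W :: "'x::finite \<Rightarrow> 's \<Rightarrow> ('y::finite \<times> 'z::finite) pmf"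
    and F :: "'y list \<Rightarrow> 'k::finite list \<Rightarrow> 'k pmf"
  assumes "finite (set_pmf (code_dist N PS W F Enc i))"
  shows "finite (set_pmf (RR N PS W F Enc i))"
proof (rule finite_subset)
  show "set_pmf (RR N PS W F Enc i) \<subseteq> set_pmf (code_dist N PS W F Enc i) \<times> UNIV"
    using RR_supp by fastforce
  show "finite (set_pmf (code_dist N PS W F Enc i) \<times> (UNIV :: ('k \<times> 's \<times> 'x \<times> 'y \<times> 'z) set))"
    using assms by simp
qed

lemma code_finite:
  fixes PS :: "'s::finite pmf" and W :: "'x::finite \<Rightarrow> 's \<Rightarrow> ('y::finite \<times> 'z::finite) pmf"
    and F :: "'y list \<Rightarrow> 'k::finite list \<Rightarrow> 'k pmf"
  assumes N: "N \<ge> 1"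
  shows "finite (set_pmf (code_dist N PS W F Enc i))"
proof (induction i)
  case 0
  have "{1..N} \<noteq> {}" using N by simp
  then show ?case by simp
next
  case (Suc i)
  show ?case unfolding code_Suc using RR_finite[OF Suc] by simp
qed

lemma map_fst_RR: "map_pmf fst (RR N PS W F Enc i) = code_dist N PS W F Enc i"
  unfolding RR_def map_bind_pmf
  apply (rule trans[OF bind_pmf_cong[OF refl] bind_return_pmf'])
  apply (subst map_pmf_cong[where g="\<lambda>_. _", OF refl])
   apply auto
  done

lemma trunc_code:
  assumes "j \<le> n"
  shows "map_pmf (trunc j) (code_dist N PS W F Enc n) = code_dist N PS W F Enc j"
  using assms
proof (induction n arbitrary: j)
  case 0
  then have "j = 0" by simp
  then show ?case by (auto intro!: map_pmf_idI simp: trunc_def dest: code_len)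
next
  case (Suc n)
  show ?case
  proof (cases "j = Suc n")
    case True
    show ?thesis unfolding True
    proof (rule map_pmf_idI)
      fix w assume "w \<in> set_pmf (code_dist N PS W F Enc (Suc n))"
      from code_len[OF this] show "trunc (Suc n) w = w" by (simp add: trunc_def)
    qed
  next
    case False
    then have j: "j \<le> n" using Suc.prems by simp
    have "map_pmf (trunc j) (code_dist N PS W F Enc (Suc n))
        = map_pmf (\<lambda>t. trunc j (GG t)) (RR N PS W F Enc n)"
      by (simp only: code_Suc map_pmf_comp)
    also have "\<dots> = map_pmf (\<lambda>t. trunc j (fst t)) (RR N PS W F Enc n)"
    proof (intro map_pmf_cong refl)
      fix t assume t: "t \<in> set_pmf (RR N PS W F Enc n)"
      have "length (snd (fst t)) = n" using code_len[OF RR_supp[OF t]] .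
      then show "trunc j (GG t) = trunc j (fst t)" using j by (simp add: trunc_def GG_def)
    qed
    also have "\<dots> = map_pmf (trunc j) (map_pmf fst (RR N PS W F Enc n))" by (simp add: map_pmf_comp)
    also have "\<dots> = code_dist N PS W F Enc j" by (simp add: map_fst_RR Suc.IH[OF j])
    finally show ?thesis .
  qed
qed



definition oM :: "(nat \<times> ('s,'k,'x,'y,'z) sym list) \<times> 'k \<times> 's \<times> 'x \<times> 'y \<times> 'z \<Rightarrow> nat" where "oM t = fst (fst t)"
definition oX :: "(nat \<times> ('s,'k,'x,'y,'z) sym list) \<times> 'k \<times> 's \<times> 'x \<times> 'y \<times> 'z \<Rightarrow> 'x list" where "oX t = map sX (snd (fst t))"
definition oK :: "(nat \<times> ('s,'k,'x,'y,'z) sym list) \<times> 'k \<times> 's \<times> 'x \<times> 'y \<times> 'z \<Rightarrow> 'k list" where "oK t = map sK (snd (fst t))"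
definition oY :: "(nat \<times> ('s,'k,'x,'y,'z) sym list) \<times> 'k \<times> 's \<times> 'x \<times> 'y \<times> 'z \<Rightarrow> 'y list" where "oY t = map sY (snd (fst t))"
definition oZ :: "(nat \<times> ('s,'k,'x,'y,'z) sym list) \<times> 'k \<times> 's \<times> 'x \<times> 'y \<times> 'z \<Rightarrow> 'z list" where "oZ t = map sZ (snd (fst t))"
definition oS :: "(nat \<times> ('s,'k,'x,'y,'z) sym list) \<times> 'k \<times> 's \<times> 'x \<times> 'y \<times> 'z \<Rightarrow> 's list" where "oS t = map sS (snd (fst t))"
definition ok :: "(nat \<times> ('s,'k,'x,'y,'z) sym list) \<times> 'k \<times> 's \<times> 'x \<times> 'y \<times> 'z \<Rightarrow> 'k" where "ok t = fst (snd t)"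
definition os :: "(nat \<times> ('s,'k,'x,'y,'z) sym list) \<times> 'k \<times> 's \<times> 'x \<times> 'y \<times> 'z \<Rightarrow> 's" where "os t = fst (snd (snd t))"
definition ox :: "(nat \<times> ('s,'k,'x,'y,'z) sym list) \<times> 'k \<times> 's \<times> 'x \<times> 'y \<times> 'z \<Rightarrow> 'x" where "ox t = fst (snd (snd (snd t)))"
definition oy :: "(nat \<times> ('s,'k,'x,'y,'z) sym list) \<times> 'k \<times> 's \<times> 'x \<times> 'y \<times> 'z \<Rightarrow> 'y" where "oy t = fst (snd (snd (snd (snd t))))"
definition oz :: "(nat \<times> ('s,'k,'x,'y,'z) sym list) \<times> 'k \<times> 's \<times> 'x \<times> 'y \<times> 'z \<Rightarrow> 'z" where "oz t = snd (snd (snd (snd (snd t))))"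

lemmas odefs = oM_def oX_def oK_def oY_def oZ_def oS_def ok_def os_def ox_def oy_def oz_def

lemma trunc_simps:
  "a \<le> b \<Longrightarrow> Kseq a (trunc b w) = Kseq a w"
  "a \<le> b \<Longrightarrow> Sseq a (trunc b w) = Sseq a w"
  "a \<le> b \<Longrightarrow> Xseq a (trunc b w) = Xseq a w"
  "a \<le> b \<Longrightarrow> Yseq a (trunc b w) = Yseq a w"
  "a \<le> b \<Longrightarrow> Zseq a (trunc b w) = Zseq a w"
  "1 \<le> a \<Longrightarrow> a \<le> b \<Longrightarrow> Ksym a (trunc b w) = Ksym a w"
  "1 \<le> a \<Longrightarrow> a \<le> b \<Longrightarrow> Ssym a (trunc b w) = Ssym a w"
  "1 \<le> a \<Longrightarrow> a \<le> b \<Longrightarrow> Xsym a (trunc b w) = Xsym a w"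
  "1 \<le> a \<Longrightarrow> a \<le> b \<Longrightarrow> Ysym a (trunc b w) = Ysym a w"
  "1 \<le> a \<Longrightarrow> a \<le> b \<Longrightarrow> Zsym a (trunc b w) = Zsym a w"
  "Mv (trunc b w) = Mv w"
  by (simp_all add: trunc_def Kseq_def Sseq_def Xseq_def Yseq_def Zseq_def
      Ksym_def Ssym_def Xsym_def Ysym_def Zsym_def Mv_def min_absorb1)

lemma GG_simps:
  assumes "length (snd (fst t)) = i"
  shows "Kseq (Suc i) (GG t) = oK t @ [ok t]" "Sseq (Suc i) (GG t) = oS t @ [os t]"
    "Xseq (Suc i) (GG t) = oX t @ [ox t]" "Yseq (Suc i) (GG t) = oY t @ [oy t]"
    "Zseq (Suc i) (GG t) = oZ t @ [oz t]"
    "Kseq i (GG t) = oK t" "Sseq i (GG t) = oS t" "Xseq i (GG t) = oX t"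
    "Yseq i (GG t) = oY t" "Zseq i (GG t) = oZ t"
    "Ksym (Suc i) (GG t) = ok t" "Ssym (Suc i) (GG t) = os t" "Xsym (Suc i) (GG t) = ox t"
    "Ysym (Suc i) (GG t) = oy t" "Zsym (Suc i) (GG t) = oz t" "Mv (GG t) = oM t"
  using assms
  by (simp_all add: GG_def Kseq_def Sseq_def Xseq_def Yseq_def Zseq_def
      Ksym_def Ssym_def Xsym_def Ysym_def Zsym_def Mv_def odefs sK_def sS_def sX_def sY_def sZ_def nth_append)

lemma ce_code:
  assumes ji: "Suc i \<le> n" and hX: "\<And>w. X (trunc (Suc i) w) = X w" and hY: "\<And>w. Y (trunc (Suc i) w) = Y w"
  shows "cond_entropy (code_dist N PS W F Enc n) X Y = cond_entropy (RR N PS W F Enc i) (\<lambda>t. X (GG t)) (\<lambda>t. Y (GG t))"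
proof -
  have "cond_entropy (code_dist N PS W F Enc n) X Y = cond_entropy (code_dist N PS W F Enc n) (\<lambda>w. X (trunc (Suc i) w)) (\<lambda>w. Y (trunc (Suc i) w))"
    by (simp add: hX hY)
  also have "\<dots> = cond_entropy (map_pmf (trunc (Suc i)) (code_dist N PS W F Enc n)) X Y" by (simp add: ce_map)
  also have "\<dots> = cond_entropy (code_dist N PS W F Enc (Suc i)) X Y"
    by (simp only: trunc_code[OF ji])
  also have "\<dots> = cond_entropy (RR N PS W F Enc i) (\<lambda>t. X (GG t)) (\<lambda>t. Y (GG t))"
    by (simp only: code_Suc ce_map)
  finally show ?thesis .
qed

theorem lemma1:
  fixes N n j :: nat
    and PS :: "'s::finite pmf"
    and W :: "'x::finite \<Rightarrow> 's \<Rightarrow> ('y::finite \<times> 'z::finite) pmf"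
    and F :: "'y list \<Rightarrow> 'k::finite list \<Rightarrow> 'k pmf"
    and Enc :: "nat \<Rightarrow> 'x list \<Rightarrow> 's list \<Rightarrow> 'k list \<Rightarrow> 'x pmf"
  defines "P \<equiv> code_dist N PS W F Enc n"
  assumes "N \<ge> 1"
    and "1 \<le> j" and "j \<le> n"
  shows
   "cond_entropy P (Kseq j) (\<lambda>w. (Zseq j w, Sseq j w))
    + cond_mutual_info P (\<lambda>w. (Mv w, Xseq j w)) (Yseq j) (\<lambda>w. (Kseq j w, Zseq j w, Sseq j w))
    + cond_entropy P (Sseq j) (Zseq j)
    \<le> cond_entropy P (Kseq (j - 1)) (\<lambda>w. (Zseq (j - 1) w, Sseq (j - 1) w))
    + cond_mutual_info P (\<lambda>w. (Mv w, Xseq (j - 1) w)) (Yseq (j - 1))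
        (\<lambda>w. (Kseq (j - 1) w, Zseq (j - 1) w, Sseq (j - 1) w))
    + cond_entropy P (Sseq (j - 1)) (Zseq (j - 1))
    + cond_entropy P (Ksym j)
        (\<lambda>w. (Mv w, Xseq (j - 1) w, Kseq (j - 1) w, Zseq (j - 1) w, Sseq (j - 1) w))
    + cond_mutual_info P (Xsym j) (Ysym j) (\<lambda>w. (Zsym j w, Ssym j w))
    + cond_entropy P (Ssym j) (Zsym j)"
proof -
  obtain i where j: "j = Suc i" using assms(3) by (cases j) auto
  have ji: "Suc i \<le> n" using j assms(4) by simp
  have jm: "j - 1 = i" using j by simp
  define R where "R = RR N PS W F Enc i"
  have fin: "finite (set_pmf R)" unfolding R_def by (intro RR_finite code_finite assms(2))
  have len: "\<And>t. t \<in> set_pmf R \<Longrightarrow> length (snd (fst t)) = i"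
    unfolding R_def by (rule code_len[OF RR_supp])
  have T1: "cond_entropy P (Kseq j) (\<lambda>w. (Zseq j w, Sseq j w)) = ent R (\<lambda>t. (oK t, ok t, oZ t, oz t, oS t, os t)) - ent R (\<lambda>t. (oZ t, oz t, oS t, os t))"
    unfolding jm j
    unfolding P_def
    apply (subst ce_code[OF ji])
      apply (simp add: trunc_simps)
     apply (simp add: trunc_simps)
    apply (subst ce_ent[OF fin[unfolded R_def]])
    unfolding R_def[symmetric]
    apply (rule arg_cong2[where f="(-)"])
     apply (rule ent_cong[OF _ fin])
      apply (auto simp: GG_simps[OF len])[1]
    apply (rule ent_cong[OF _ fin])
    apply (auto simp: GG_simps[OF len])[1]
    done
  have T2a: "cond_entropy P (\<lambda>w. (Mv w, Xseq j w)) (\<lambda>w. (Kseq j w, Zseq j w, Sseq j w)) = ent R (\<lambda>t. (oM t, oX t, ox t, oK t, ok t, oZ t, oz t, oS t, os t)) - ent R (\<lambda>t. (oK t, ok t, oZ t, oz t, oS t, os t))"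
    unfolding jm j
    unfolding P_def
    apply (subst ce_code[OF ji])
      apply (simp add: trunc_simps)
     apply (simp add: trunc_simps)
    apply (subst ce_ent[OF fin[unfolded R_def]])
    unfolding R_def[symmetric]
    apply (rule arg_cong2[where f="(-)"])
     apply (rule ent_cong[OF _ fin])
      apply (auto simp: GG_simps[OF len])[1]
    apply (rule ent_cong[OF _ fin])
    apply (auto simp: GG_simps[OF len])[1]
    done
  have T2b: "cond_entropy P (\<lambda>w. (Mv w, Xseq j w)) (\<lambda>w. (Yseq j w, Kseq j w, Zseq j w, Sseq j w)) = ent R (\<lambda>t. (oM t, oX t, ox t, oY t, oy t, oK t, ok t, oZ t, oz t, oS t, os t)) - ent R (\<lambda>t. (oY t, oy t, oK t, ok t, oZ t, oz t, oS t, os t))"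
    unfolding jm j
    unfolding P_def
    apply (subst ce_code[OF ji])
      apply (simp add: trunc_simps)
     apply (simp add: trunc_simps)
    apply (subst ce_ent[OF fin[unfolded R_def]])
    unfolding R_def[symmetric]
    apply (rule arg_cong2[where f="(-)"])
     apply (rule ent_cong[OF _ fin])
      apply (auto simp: GG_simps[OF len])[1]
    apply (rule ent_cong[OF _ fin])
    apply (auto simp: GG_simps[OF len])[1]
    done
  have T3: "cond_entropy P (Sseq j) (Zseq j) = ent R (\<lambda>t. (oZ t, oz t, oS t, os t)) - ent R (\<lambda>t. (oZ t, oz t))"
    unfolding jm j
    unfolding P_def
    apply (subst ce_code[OF ji])
      apply (simp add: trunc_simps)
     apply (simp add: trunc_simps)
    apply (subst ce_ent[OF fin[unfolded R_def]])
    unfolding R_def[symmetric]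
    apply (rule arg_cong2[where f="(-)"])
     apply (rule ent_cong[OF _ fin])
      apply (auto simp: GG_simps[OF len])[1]
    apply (rule ent_cong[OF _ fin])
    apply (auto simp: GG_simps[OF len])[1]
    done
  have T4: "cond_entropy P (Kseq (j - 1)) (\<lambda>w. (Zseq (j - 1) w, Sseq (j - 1) w)) = ent R (\<lambda>t. (oK t, oZ t, oS t)) - ent R (\<lambda>t. (oZ t, oS t))"
    unfolding jm j
    unfolding P_def
    apply (subst ce_code[OF ji])
      apply (simp add: trunc_simps)
     apply (simp add: trunc_simps)
    apply (subst ce_ent[OF fin[unfolded R_def]])
    unfolding R_def[symmetric]
    apply (rule arg_cong2[where f="(-)"])
     apply (rule ent_cong[OF _ fin])
      apply (auto simp: GG_simps[OF len])[1]
    apply (rule ent_cong[OF _ fin])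
    apply (auto simp: GG_simps[OF len])[1]
    done
  have T5a: "cond_entropy P (\<lambda>w. (Mv w, Xseq (j - 1) w)) (\<lambda>w. (Kseq (j - 1) w, Zseq (j - 1) w, Sseq (j - 1) w)) = ent R (\<lambda>t. (oM t, oX t, oK t, oZ t, oS t)) - ent R (\<lambda>t. (oK t, oZ t, oS t))"
    unfolding jm j
    unfolding P_def
    apply (subst ce_code[OF ji])
      apply (simp add: trunc_simps)
     apply (simp add: trunc_simps)
    apply (subst ce_ent[OF fin[unfolded R_def]])
    unfolding R_def[symmetric]
    apply (rule arg_cong2[where f="(-)"])
     apply (rule ent_cong[OF _ fin])
      apply (auto simp: GG_simps[OF len])[1]
    apply (rule ent_cong[OF _ fin])
    apply (auto simp: GG_simps[OF len])[1]
    done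
  have T5b: "cond_entropy P (\<lambda>w. (Mv w, Xseq (j - 1) w)) (\<lambda>w. (Yseq (j - 1) w, Kseq (j - 1) w, Zseq (j - 1) w, Sseq (j - 1) w)) = ent R (\<lambda>t. (oM t, oX t, oY t, oK t, oZ t, oS t)) - ent R (\<lambda>t. (oY t, oK t, oZ t, oS t))"
    unfolding jm j
    unfolding P_def
    apply (subst ce_code[OF ji])
      apply (simp add: trunc_simps)
     apply (simp add: trunc_simps)
    apply (subst ce_ent[OF fin[unfolded R_def]])
    unfolding R_def[symmetric]
    apply (rule arg_cong2[where f="(-)"])
     apply (rule ent_cong[OF _ fin])
      apply (auto simp: GG_simps[OF len])[1]
    apply (rule ent_cong[OF _ fin])
    apply (auto simp: GG_simps[OF len])[1]
    done
  have T6: "cond_entropy P (Sseq (j - 1)) (Zseq (j - 1)) = ent R (\<lambda>t. (oZ t, oS t)) - ent R (\<lambda>t. oZ t)"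
    unfolding jm j
    unfolding P_def
    apply (subst ce_code[OF ji])
      apply (simp add: trunc_simps)
     apply (simp add: trunc_simps)
    apply (subst ce_ent[OF fin[unfolded R_def]])
    unfolding R_def[symmetric]
    apply (rule arg_cong2[where f="(-)"])
     apply (rule ent_cong[OF _ fin])
      apply (auto simp: GG_simps[OF len])[1]
    apply (rule ent_cong[OF _ fin])
    apply (auto simp: GG_simps[OF len])[1]
    done
  have T7: "cond_entropy P (Ksym j) (\<lambda>w. (Mv w, Xseq (j - 1) w, Kseq (j - 1) w, Zseq (j - 1) w, Sseq (j - 1) w)) = ent R (\<lambda>t. (oM t, oX t, oK t, ok t, oZ t, oS t)) - ent R (\<lambda>t. (oM t, oX t, oK t, oZ t, oS t))"
    unfolding jm j
    unfolding P_def
    apply (subst ce_code[OF ji])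
      apply (simp add: trunc_simps)
     apply (simp add: trunc_simps)
    apply (subst ce_ent[OF fin[unfolded R_def]])
    unfolding R_def[symmetric]
    apply (rule arg_cong2[where f="(-)"])
     apply (rule ent_cong[OF _ fin])
      apply (auto simp: GG_simps[OF len])[1]
    apply (rule ent_cong[OF _ fin])
    apply (auto simp: GG_simps[OF len])[1]
    done
  have T8a: "cond_entropy P (Xsym j) (\<lambda>w. (Zsym j w, Ssym j w)) = ent R (\<lambda>t. (ox t, oz t, os t)) - ent R (\<lambda>t. (oz t, os t))"
    unfolding jm j
    unfolding P_def
    apply (subst ce_code[OF ji])
      apply (simp add: trunc_simps)
     apply (simp add: trunc_simps)
    apply (subst ce_ent[OF fin[unfolded R_def]])
    unfolding R_def[symmetric]
    apply (rule arg_cong2[where f="(-)"])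
     apply (rule ent_cong[OF _ fin])
      apply (auto simp: GG_simps[OF len])[1]
    apply (rule ent_cong[OF _ fin])
    apply (auto simp: GG_simps[OF len])[1]
    done
  have T8b: "cond_entropy P (Xsym j) (\<lambda>w. (Ysym j w, Zsym j w, Ssym j w)) = ent R (\<lambda>t. (ox t, oy t, oz t, os t)) - ent R (\<lambda>t. (oy t, oz t, os t))"
    unfolding jm j
    unfolding P_def
    apply (subst ce_code[OF ji])
      apply (simp add: trunc_simps)
     apply (simp add: trunc_simps)
    apply (subst ce_ent[OF fin[unfolded R_def]])
    unfolding R_def[symmetric]
    apply (rule arg_cong2[where f="(-)"])
     apply (rule ent_cong[OF _ fin])
      apply (auto simp: GG_simps[OF len])[1]
    apply (rule ent_cong[OF _ fin])
    apply (auto simp: GG_simps[OF len])[1]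
    done
  have T9: "cond_entropy P (Ssym j) (Zsym j) = ent R (\<lambda>t. (oz t, os t)) - ent R (\<lambda>t. oz t)"
    unfolding jm j
    unfolding P_def
    apply (subst ce_code[OF ji])
      apply (simp add: trunc_simps)
     apply (simp add: trunc_simps)
    apply (subst ce_ent[OF fin[unfolded R_def]])
    unfolding R_def[symmetric]
    apply (rule arg_cong2[where f="(-)"])
     apply (rule ent_cong[OF _ fin])
      apply (auto simp: GG_simps[OF len])[1]
    apply (rule ent_cong[OF _ fin])
    apply (auto simp: GG_simps[OF len])[1]
    done
  have F4: "ent R (\<lambda>t. (oM t, oX t, oY t, oK t, ok t, oZ t, oS t)) + ent R (\<lambda>t. (oY t, oK t, oZ t, oS t)) = ent R (\<lambda>t. (oY t, oK t, ok t, oZ t, oS t)) + ent R (\<lambda>t. (oM t, oX t, oY t, oK t, oZ t, oS t))"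
    apply (rule kern_ent[where D="code_dist N PS W F Enc i" and K="\<lambda>u. F (map sY (snd u)) (map sK (snd u))" and N="\<lambda>u k. bind_pmf PS (\<lambda>s. bind_pmf (Enc (fst u) (map sX (snd u)) (map sS (snd u) @ [s]) (map sK (snd u) @ [k])) (\<lambda>x. bind_pmf (W x s) (\<lambda>yz. return_pmf (u, k, s, x, fst yz, snd yz))))" and L="\<lambda>v. F (fst (snd v)) (fst v)" and \<alpha>="\<lambda>u. (map sK (snd u), map sY (snd u), map sS (snd u), map sZ (snd u))" and \<phi>="\<lambda>k. k" and \<psi>="\<lambda>u. (fst u, map sX (snd u))" and \<Phi>="ok" and A="\<lambda>t. (oK t, oY t, oS t, oZ t)" and \<Psi>="\<lambda>t. (oM t, oX t)"])
           apply (rule fin)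
          apply (simp add: R_def RR_def bind_assoc_pmf bind_return_pmf)
         apply (simp add: split_beta)
        apply (auto simp: odefs)[1]
       apply (auto)
    done
  have F3: "ent R (\<lambda>t. (oM t, oX t, oY t, oK t, ok t, oZ t, oS t, os t)) + ent R (\<lambda>t. (oM t, oX t, oK t, ok t, oZ t, oS t)) = ent R (\<lambda>t. (oM t, oX t, oK t, ok t, oZ t, oS t, os t)) + ent R (\<lambda>t. (oM t, oX t, oY t, oK t, ok t, oZ t, oS t))"
    apply (rule kern_ent[where D="bind_pmf (code_dist N PS W F Enc i) (\<lambda>u. bind_pmf (F (map sY (snd u)) (map sK (snd u))) (\<lambda>k. return_pmf (u, k)))" and K="\<lambda>_. PS" and N="\<lambda>a s. bind_pmf (Enc (fst (fst a)) (map sX (snd (fst a))) (map sS (snd (fst a)) @ [s]) (map sK (snd (fst a)) @ [snd a])) (\<lambda>x. bind_pmf (W x s) (\<lambda>yz. return_pmf (fst a, snd a, s, x, fst yz, snd yz)))" and L="\<lambda>_. PS" and \<alpha>="\<lambda>a. (fst (fst a), map sX (snd (fst a)), map sK (snd (fst a)), map sZ (snd (fst a)), map sS (snd (fst a)), snd a)" and \<phi>="\<lambda>s. s" and \<psi>="\<lambda>a. map sY (snd (fst a))" and \<Phi>="os" and A="\<lambda>t. (oM t, oX t, oK t, oZ t, oS t, ok t)" and \<Psi>="oY"])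
           apply (rule fin)
          apply (simp add: R_def RR_def bind_assoc_pmf bind_return_pmf)
         apply (simp add: split_beta)
        apply (auto simp: odefs)[1]
       apply (auto)
    done
  have F2: "ent R (\<lambda>t. (oM t, oX t, ox t, oY t, oK t, ok t, oZ t, oz t, oS t, os t)) + ent R (\<lambda>t. (oM t, oX t, oK t, ok t, oZ t, oS t, os t)) = ent R (\<lambda>t. (oM t, oX t, ox t, oK t, ok t, oZ t, oz t, oS t, os t)) + ent R (\<lambda>t. (oM t, oX t, oY t, oK t, ok t, oZ t, oS t, os t))"
    apply (rule kern_ent[where D="bind_pmf (code_dist N PS W F Enc i) (\<lambda>u. bind_pmf (F (map sY (snd u)) (map sK (snd u))) (\<lambda>k. bind_pmf PS (\<lambda>s. return_pmf (u, k, s))))" and K="\<lambda>a. bind_pmf (Enc (fst (fst a)) (map sX (snd (fst a))) (map sS (snd (fst a)) @ [snd (snd a)]) (map sK (snd (fst a)) @ [fst (snd a)])) (\<lambda>x. bind_pmf (W x (snd (snd a))) (\<lambda>yz. return_pmf (x, yz)))" and N="\<lambda>a b. return_pmf (fst a, fst (snd a), snd (snd a), fst b, fst (snd b), snd (snd b))" and L="\<lambda>v. case v of (m, X, K, Z, S, k, s) \<Rightarrow> bind_pmf (Enc m X (S @ [s]) (K @ [k])) (\<lambda>x. bind_pmf (W x s) (\<lambda>yz. return_pmf (x, yz)))" and \<alpha>="\<lambda>a. (fst (fst a), map sX (snd (fst a)), map sK (snd (fst a)), map sZ (snd (fst a)), map sS (snd (fst a)), fst (snd a), snd (snd a))" and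 \<phi>="\<lambda>b. (fst b, snd (snd b))" and \<psi>="\<lambda>a. map sY (snd (fst a))" and \<Phi>="\<lambda>t. (ox t, oz t)" and A="\<lambda>t. (oM t, oX t, oK t, oZ t, oS t, ok t, os t)" and \<Psi>="oY"])
           apply (rule fin)
          apply (simp add: R_def RR_def bind_assoc_pmf bind_return_pmf)
         apply (simp add: split_beta)
        apply (auto simp: odefs)[1]
       apply (auto)
    done
  have F1a: "ent R (\<lambda>t. (oM t, oX t, ox t, oY t, oy t, oK t, ok t, oZ t, oz t, oS t, os t)) + ent R (\<lambda>t. (ox t, os t)) = ent R (\<lambda>t. (ox t, oy t, oz t, os t)) + ent R (\<lambda>t. (oM t, oX t, ox t, oY t, oK t, ok t, oZ t, oS t, os t))"
    apply (rule kern_ent[where D="bind_pmf (code_dist N PS W F Enc i) (\<lambda>u. bind_pmf (F (map sY (snd u)) (map sK (snd u))) (\<lambda>k. bind_pmf PS (\<lambda>s. bind_pmf (Enc (fst u) (map sX (snd u)) (map sS (snd u) @ [s]) (map sK (snd u) @ [k])) (\<lambda>x. return_pmf (u, k, s, x)))))" and K="\<lambda>a. W (snd (snd (snd a))) (fst (snd (snd a)))" and N="\<lambda>a yz. return_pmf (fst a, fst (snd a), fst (snd (snd a)), snd (snd (snd a)), fst yz, snd yz)" and L="\<lambda>v. W (fst v) (snd v)" and \<alpha>="\<lambda>a. (snd (snd (snd a)), fst (snd (snd a)))" and \<phi>="\<lambda>yz. yz" and \<psi>="\<lambda>a. (fst (fst a), map sX (snd (fst a)), map sK (snd (fst a)),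 fst (snd a), map sZ (snd (fst a)), map sS (snd (fst a)), map sY (snd (fst a)))" and \<Phi>="\<lambda>t. (oy t, oz t)" and A="\<lambda>t. (ox t, os t)" and \<Psi>="\<lambda>t. (oM t, oX t, oK t, ok t, oZ t, oS t, oY t)"])
           apply (rule fin)
          apply (simp add: R_def RR_def bind_assoc_pmf bind_return_pmf)
         apply (simp add: split_beta)
        apply (auto simp: odefs)[1]
       apply (auto)
    done
  have F1b: "ent R (\<lambda>t. (oM t, oX t, ox t, oY t, oK t, ok t, oZ t, oz t, oS t, os t)) + ent R (\<lambda>t. (ox t, os t)) = ent R (\<lambda>t. (ox t, oz t, os t)) + ent R (\<lambda>t. (oM t, oX t, ox t, oY t, oK t, ok t, oZ t, oS t, os t))"
    apply (rule kern_ent[where D="bind_pmf (code_dist N PS W F Enc i) (\<lambda>u. bind_pmf (F (map sY (snd u)) (map sK (snd u))) (\<lambda>k. bind_pmf PS (\<lambda>s. bind_pmf (Enc (fst u) (map sX (snd u)) (map sS (snd u) @ [s]) (map sK (snd u) @ [k])) (\<lambda>x. return_pmf (u, k, s, x)))))" and K="\<lambda>a. W (snd (snd (snd a))) (fst (snd (snd a)))" and N="\<lambda>a yz. return_pmf (fst a, fst (snd a), fst (snd (snd a)), snd (snd (snd a)), fst yz, snd yz)" and L="\<lambda>v. W (fst v) (snd v)" and \<alpha>="\<lambda>a. (snd (snd (snd a)), fst (snd (snd a)))" and \<phi>="snd" and \<psi>="\<lambda>a. (fst (fst a), map sX (snd (fst a)), map sK (snd (fst a)), fst (snd a), map sZ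 (snd (fst a)), map sS (snd (fst a)), map sY (snd (fst a)))" and \<Phi>="oz" and A="\<lambda>t. (ox t, os t)" and \<Psi>="\<lambda>t. (oM t, oX t, oK t, ok t, oZ t, oS t, oY t)"])
           apply (rule fin)
          apply (simp add: R_def RR_def bind_assoc_pmf bind_return_pmf)
         apply (simp add: split_beta)
        apply (auto simp: odefs)[1]
       apply (auto)
    done
  have S1: "ent R (\<lambda>t. (oY t, oy t, oK t, ok t, oZ t, oz t, oS t, os t)) + ent R (\<lambda>t. oz t) \<le> ent R (\<lambda>t. (oy t, oz t, os t)) + ent R (\<lambda>t. (oY t, oK t, ok t, oZ t, oz t, oS t))"
    by (rule submod_gen[OF fin, where X="\<lambda>t. (oy t, os t)" and Y="oz" and Z="\<lambda>t. (oK t, ok t, oY t, oS t, oZ t)"]) auto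
  have S2: "ent R (\<lambda>t. (oY t, oK t, ok t, oZ t, oz t, oS t)) + ent R (\<lambda>t. oZ t) \<le> ent R (\<lambda>t. (oY t, oK t, ok t, oZ t, oS t)) + ent R (\<lambda>t. (oZ t, oz t))"
    by (rule submod_gen[OF fin, where X="\<lambda>t. (oK t, ok t, oY t, oS t)" and Y="oZ" and Z="oz"]) auto
  show ?thesis
    unfolding cond_mutual_info_def
    using T1 T2a T2b T3 T4 T5a T5b T6 T7 T8a T8b T9 F1a F1b F2 F3 F4 S1 S2 by linarith
qed

end
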